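(* Let $m/n\in(0,1/2]$. Then the set of spans $\Gamma_n^P$ of $\ast$-orbits $P$ of $f_{m/n}$ is totally ordered by inclusion.
   Context: For $n\ge2$, $\Gamma_n\subset D^2$ is an $n$-star: a tree with edges $e_0,\dots,e_{n-1}$ of equal length, each with a valence-1 vertex at its initial point, meeting at their final points at a central vertex $v$ of valence $n$, cyclically ordered by index. For $m/n\in(0,1/2]$ in lowest terms, $f_{m/n}\colon\Gamma_n\to\Gamma_n$ is the tree map with image edge paths $f_{m/n}(e_0)=e_0\bar e_1e_1\bar e_2e_2\cdots\bar e_me_m$ and $f_{m/n}(e_r)=e_{r+_nm}$ for $r\neq0$ (here $\bar e$ is the reverse of $e$ and $+_n$ is addition mod $n$), expanding each edge uniformly away from preimages of vertices. A $\ast$-orbit is a periodic orbit $P$ of $f_{m/n}$ such that: (a) $P\neq\{v\}$; (b) $P\cap e_r\neq\emptyset$ for all $r$; (c) $f_{m/n}(P\cap e_0)\not\subseteq e_m$; (d) if $p_r$ is the point of $P\cap e_r$ closest to the initial point of $e_r$, then $f_{m/n}(p_r)=p_{r+_nm}$ for all $r\neq0$. The span $\Gamma_n^P$ of $P$ is the smallest connected subset of $\Gamma_n$ containing $P$. *)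

theory Defs
  imports "HOL-Analysis.Analysis"
begin

text \<open>Points of the n-star: the central vertex V, or the point E r t on edge e_r
  at parameter t \<in> [0,1) measured from the initial (valence-1) vertex of e_r
  (t = 1 would be the central vertex).\<close>
datatype spt = V | E nat real

definition star :: "nat \<Rightarrow> spt set" where
  "star n = insert V {E r t | r t. r < n \<and> 0 \<le> t \<and> t < 1}"

definition edge :: "nat \<Rightarrow> spt set" where
  "edge r = insert V {E r t | t. 0 \<le> t \<and> t < 1}"

definition mkpt :: "nat \<Rightarrow> real \<Rightarrow> spt" where
  "mkpt r t = (if 1 \<le> t then V else E r t)"

fun emb :: "nat \<Rightarrow> spt \<Rightarrow> complex" where
  "emb n V = 0"
| "emb n (E r t) = complex_of_real (1 - t) * cis (2 * pi * real r / real n)"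

text \<open>The image of the point at parameter s \<in> [0, 2m+1) of the edge path
  e_0 (e_1)^{-1} e_1 (e_2)^{-1} e_2 ... (e_m)^{-1} e_m, each edge traversed at unit speed.\<close>
definition path0 :: "real \<Rightarrow> spt" where
  "path0 s = (let k = nat \<lfloor>s\<rfloor>; u = s - real k in
     if k = 0 then mkpt 0 u
     else if odd k then mkpt ((k + 1) div 2) (1 - u)
     else mkpt (k div 2) u)"

fun fmap :: "nat \<Rightarrow> nat \<Rightarrow> spt \<Rightarrow> spt" where
  "fmap n m V = V"
| "fmap n m (E r t) = (if r = 0 then path0 ((2 * real m + 1) * t)
                      else E ((r + m) mod n) t)"

definition periodic_orbit :: "nat \<Rightarrow> nat \<Rightarrow> spt set \<Rightarrow> bool" where
  "periodic_orbit n m P \<longleftrightarrow>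
     (\<exists>x \<in> star n. \<exists>p > 0. (fmap n m ^^ p) x = x \<and> P = range (\<lambda>k. (fmap n m ^^ k) x))"

fun param :: "spt \<Rightarrow> real" where
  "param V = 1"
| "param (E r t) = t"

definition closest :: "spt set \<Rightarrow> nat \<Rightarrow> spt \<Rightarrow> bool" where
  "closest P r x \<longleftrightarrow> x \<in> P \<inter> edge r \<and> (\<forall>y \<in> P \<inter> edge r. param x \<le> param y)"

definition star_orbit :: "nat \<Rightarrow> nat \<Rightarrow> spt set \<Rightarrow> bool" where
  "star_orbit n m P \<longleftrightarrow>
     periodic_orbit n m P \<and>
     P \<noteq> {V} \<and>
     (\<forall>r < n. P \<inter> edge r \<noteq> {}) \<and>
     \<not> (fmap n m ` (P \<inter> edge 0) \<subseteq> edge m) \<and>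
     (\<forall>r. 0 < r \<and> r < n \<longrightarrow>
        (\<forall>x. closest P r x \<longrightarrow> closest P ((r + m) mod n) (fmap n m x)))"

definition star_span :: "nat \<Rightarrow> spt set \<Rightarrow> spt set" where
  "star_span n P = {x \<in> star n. \<forall>S. S \<subseteq> star n \<and> P \<subseteq> S \<and> connected (emb n ` S) \<longrightarrow> x \<in> S}"

end

theory Submission
  imports Defs
begin


definition cc :: "nat \<Rightarrow> nat \<Rightarrow> complex" where
  "cc n k = cis (2 * pi * real k / real n)"

lemma cc_inj:
  assumes "k < n" "r < n" "cc n k = cc n r" shows "k = r"
proof -
  have n: "real n > 0" using assms by simp
  define a where "a = 2 * pi * real k / real n"
  define b where "b = 2 * pi * real r / real n"
  have ab: "0 \<le> a" "a < 2*pi" "0 \<le> b" "b < 2*pi"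
    using assms n by (auto simp: a_def b_def field_simps)
  have "cis (pi - a) = cis (pi - b)"
    using assms(3) by (simp add: cc_def a_def b_def flip: cis_divide)
  hence "Arg (cis (pi - a)) = Arg (cis (pi - b))" by simp
  hence "pi - a = pi - b" using ab by (simp add: Arg_cis)
  hence "a = b" by simp
  thus ?thesis using n by (simp add: a_def b_def field_simps)
qed

lemma norm_cc [simp]: "norm (cc n k) = 1" by (simp add: cc_def)
lemma cc_nz [simp]: "cc n k \<noteq> 0" by (simp add: cc_def)

lemma emb_E: "emb n (E r t) = (1 - t) *\<^sub>R cc n r"
  by (simp add: cc_def scaleR_conv_of_real)

declare emb.simps(2)[simp del]

lemma scal_inj:
  assumes "k < n" "r < n" "0 \<le> s" "0 \<le> s'" "s *\<^sub>R cc n k = s' *\<^sub>R cc n r"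
  shows "s = s' \<and> (s = 0 \<or> k = r)"
proof -
  have "norm (s *\<^sub>R cc n k) = norm (s' *\<^sub>R cc n r)" using assms(5) by simp
  hence ss: "s = s'" using assms(3,4) by simp
  moreover have "s = 0 \<or> k = r"
  proof (cases "s = 0")
    case False
    hence "cc n k = cc n r" using assms(5) ss by simp
    thus ?thesis using cc_inj assms by blast
  qed simp
  ultimately show ?thesis by blast
qed


lemma seg_scal:
  "w \<in> closed_segment (p *\<^sub>R c) (q *\<^sub>R c) \<longleftrightarrow> (\<exists>u. 0 \<le> u \<and> u \<le> 1 \<and> w = ((1-u)*p + u*q) *\<^sub>R c)"
  by (simp add: in_segment algebra_simps)

lemma seg0:
  "w \<in> closed_segment 0 c \<longleftrightarrow> (\<exists>u. 0 \<le> u \<and> u \<le> 1 \<and> w = u *\<^sub>R c)"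
  by (simp add: in_segment)

lemma emb_mkpt: "t \<le> 1 \<Longrightarrow> emb n (mkpt r t) = (1 - t) *\<^sub>R cc n r"
  by (auto simp: mkpt_def emb_E)

lemma separation:
  assumes S: "S \<subseteq> star n" and conn: "connected (emb n ` S)"
    and r: "r < n" and r': "r' < n" "r' \<noteq> r"
    and a: "E r a \<in> S" and b: "E r' b \<in> S" and at: "a \<le> t" and t1: "t \<le> 1"
  shows "mkpt r t \<in> S"
proof -
  have a0: "0 \<le> a" "a < 1" using S a by (auto simp: star_def)
  have b0: "0 \<le> b" "b < 1" using S b by (auto simp: star_def)
  define e1 where "e1 = closed_segment (1 *\<^sub>R cc n r) ((1 - t) *\<^sub>R cc n r)"
  define e2 where "e2 = (\<Union>k\<in>{..<n}-{r}. closed_segment 0 (cc n k)) \<union> closed_segment 0 ((1 - t) *\<^sub>R cc n r)"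
  have c1: "closed e1" unfolding e1_def by simp
  have c2: "closed e2" unfolding e2_def by (intro closed_Un closed_UN) auto
  have cov: "emb n ` S \<subseteq> e1 \<union> e2"
  proof
    fix w assume "w \<in> emb n ` S"
    then obtain y where y: "y \<in> S" "w = emb n y" by auto
    show "w \<in> e1 \<union> e2"
    proof (cases y)
      case V
      then show ?thesis using y by (auto simp: e2_def)
    next
      case (E k s)
      have ks: "k < n" "0 \<le> s" "s < 1" using S y E by (auto simp: star_def)
      show ?thesis
      proof (cases "k = r")
        case False
        have "w \<in> closed_segment 0 (cc n k)" unfolding seg0 using ks y E
          by (intro exI[of _ "1 - s"]) (auto simp: emb_E)
        then show ?thesis using ks False by (auto simp: e2_def)
      next
        case True
        show ?thesis
        proof (cases "s \<le> t")
          case True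
          have "w \<in> e1" unfolding e1_def seg_scal using ks y E \<open>k = r\<close> True t1
            by (intro exI[of _ "if t = 0 then 0 else s / t"]) (auto simp: emb_E field_simps)
          then show ?thesis by simp
        next
          case False
          have "w \<in> closed_segment 0 ((1 - t) *\<^sub>R cc n r)" unfolding seg0 using ks y E \<open>k = r\<close> False t1
            by (intro exI[of _ "(1 - s) / (1 - t)"]) (auto simp: emb_E scaleR_scaleR)
          then show ?thesis by (simp add: e2_def)
        qed
      qed
    qed
  qed
  have int: "e1 \<inter> e2 \<subseteq> {(1 - t) *\<^sub>R cc n r}"
  proof
    fix w assume w: "w \<in> e1 \<inter> e2"
    have "w \<in> closed_segment (1 *\<^sub>R cc n r) ((1 - t) *\<^sub>R cc n r)" using w e1_def by simp
    then obtain u where u: "0 \<le> u" "u \<le> 1" "w = ((1-u)*1 + u*(1-t)) *\<^sub>R cc n r"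
      unfolding seg_scal by blast
    define \<sigma> where "\<sigma> = (1-u)*1 + u*(1-t)"
    have t0: "0 \<le> t" using at a0 by simp
    have "t*u \<le> t" "0 \<le> t*u" using u t0 by (simp_all add: mult_left_le)
    moreover have se: "\<sigma> = 1 - t*u" unfolding \<sigma>_def by (simp add: algebra_simps)
    ultimately have sg: "1 - t \<le> \<sigma>" "\<sigma> \<le> 1" by linarith+
    have wz: "w = \<sigma> *\<^sub>R cc n r" using u(3) unfolding \<sigma>_def .
    from w have "w \<in> e2" by blast
    then consider (a) k where "k < n" "k \<noteq> r" "w \<in> closed_segment 0 (cc n k)"
      | (b) "w \<in> closed_segment 0 ((1 - t) *\<^sub>R cc n r)"
      unfolding e2_def by blast
    then consider k v where "k < n" "k \<noteq> r" "0 \<le> v" "v \<le> 1" "w = v *\<^sub>R cc n k"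
      | v where "0 \<le> v" "v \<le> 1" "w = v *\<^sub>R ((1 - t) *\<^sub>R cc n r)"
      proof cases
        case (a k)
        then show ?thesis using that(1) unfolding seg0 by blast
      next
        case b
        then show ?thesis using that(2) unfolding seg0 by blast
      qed
    then show "w \<in> {(1 - t) *\<^sub>R cc n r}"
    proof cases
      case 1
      have "\<sigma> = v \<and> (\<sigma> = 0 \<or> r = k)"
        using scal_inj[of r n k \<sigma> v] 1 r sg wz t1 by auto
      then have "\<sigma> = 0" using 1 by auto
      then have "t = 1" using sg t1 by auto
      then show ?thesis using wz \<open>\<sigma> = 0\<close> by simp
    next
      case 2
      have "\<sigma> *\<^sub>R cc n r = (v * (1 - t)) *\<^sub>R cc n r" using 2 wz by simp
      then have "\<sigma> = v * (1 - t)" by simp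
      moreover have "v * (1 - t) \<le> 1 - t" using 2 t1 by (simp add: mult_left_le_one_le)
      ultimately have "\<sigma> = 1 - t" using sg by simp
      then show ?thesis using wz by simp
    qed
  qed
  have ne1: "emb n (E r a) \<in> e1"
    unfolding e1_def seg_scal emb_E using at a0 t1
    by (intro exI[of _ "if t = 0 then 0 else a / t"]) (auto simp: field_simps)
  have ne2: "emb n (E r' b) \<in> e2"
  proof -
    have "emb n (E r' b) \<in> closed_segment 0 (cc n r')" unfolding seg0 emb_E using b0
      by (intro exI[of _ "1 - b"]) auto
    then show ?thesis using r' by (auto simp: e2_def)
  qed
  have "emb n (mkpt r t) \<in> emb n ` S"
  proof (rule ccontr)
    assume nin: "emb n (mkpt r t) \<notin> emb n ` S"
    have nin': "(1 - t) *\<^sub>R cc n r \<notin> emb n ` S" using nin emb_mkpt[OF t1, of n r] by simp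
    have "e1 \<inter> e2 \<inter> emb n ` S = {}"
    proof (rule equals0I)
      fix z assume z: "z \<in> e1 \<inter> e2 \<inter> emb n ` S"
      then have "z = (1 - t) *\<^sub>R cc n r" using int by blast
      then show False using z nin' by blast
    qed
    moreover have "e1 \<inter> emb n ` S \<noteq> {}" using ne1 a by auto
    moreover have "e2 \<inter> emb n ` S \<noteq> {}" using ne2 b by auto
    ultimately show False using conn c1 c2 cov unfolding connected_closed by blast
  qed
  then obtain y where y: "y \<in> S" "emb n y = (1 - t) *\<^sub>R cc n r" using emb_mkpt[OF t1, of n r] by auto
  show ?thesis
  proof (cases y)
    case V
    then have "(1 - t) *\<^sub>R cc n r = 0" using y by simp
    then have "t = 1" by simp
    then show ?thesis using y V by (simp add: mkpt_def)
  next
    case (E k s)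
    have ks: "k < n" "0 \<le> s" "s < 1" using S y E by (auto simp: star_def)
    have "(1 - s) = (1 - t) \<and> (1 - s = 0 \<or> k = r)"
      using scal_inj[of k n r "1 - s" "1 - t"] ks r t1 y E by (auto simp: emb_E)
    then have "s = t" "k = r" using ks by auto
    then show ?thesis using y E ks by (simp add: mkpt_def)
  qed
qed



lemma mkpt_star: "j < n \<Longrightarrow> 0 \<le> v \<Longrightarrow> mkpt j v \<in> star n"
  by (auto simp: mkpt_def star_def)

lemma path0_star:
  assumes "j0 < n" "m < n" "0 \<le> s" "s < 2 * real m + 1"
  shows "path0 s \<in> star n"
proof -
  define k where "k = nat \<lfloor>s\<rfloor>"
  define u where "u = s - real k"
  have fl: "real k \<le> s" "s < real k + 1" using assms(3) unfolding k_def by linarith+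
  have u: "0 \<le> u" "u < 1" using fl unfolding u_def by auto
  have "real k < 2 * real m + 1" using fl assms by linarith
  hence k: "k \<le> 2 * m" by linarith
  have "path0 s = (if k = 0 then mkpt 0 u
     else if odd k then mkpt ((k + 1) div 2) (1 - u)
     else mkpt (k div 2) u)" unfolding path0_def k_def u_def Let_def by simp
  moreover have "(k + 1) div 2 < n" if "odd k" using k that assms(2) by presburger
  moreover have "k div 2 < n" using k assms(2) by linarith
  moreover have "0 < n" using assms by simp
  ultimately show ?thesis using u by (auto intro!: mkpt_star)
qed

lemma fmap_star:
  assumes "0 < m" "m < n" "x \<in> star n" shows "fmap n m x \<in> star n"
proof (cases x)
  case V then show ?thesis using assms by (simp add: star_def)
next
  case (E r t)
  have rt: "r < n" "0 \<le> t" "t < 1" using assms E by (auto simp: star_def)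
  show ?thesis
  proof (cases "r = 0")
    case True
    have "(2 * real m + 1) * t < 2 * real m + 1" using rt by simp
    then show ?thesis using E True rt assms path0_star[of 0 n m] by simp
  next
    case False
    then show ?thesis using E rt assms by (auto simp: star_def)
  qed
qed

lemma funpow_star:
  assumes "0 < m" "m < n" "x \<in> star n" shows "(fmap n m ^^ k) x \<in> star n"
  by (induction k) (use assms fmap_star in auto)

lemma funpow_V: "(fmap n m ^^ k) V = V"
  by (induction k) auto

lemma funpow_period:
  assumes "(f ^^ p) x = x" shows "(f ^^ (q * p)) x = x"
  by (induction q) (use assms in \<open>auto simp: funpow_add\<close>)

lemma orbit_facts:
  assumes "0 < m" "m < n" "periodic_orbit n m P" "P \<noteq> {V}"
  shows "finite P" "P \<subseteq> star n" "V \<notin> P"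
proof -
  obtain x p where x: "x \<in> star n" "p > 0" "(fmap n m ^^ p) x = x"
    and P: "P = range (\<lambda>k. (fmap n m ^^ k) x)"
    using assms(3) unfolding periodic_orbit_def by blast
  have "(fmap n m ^^ k) x = (fmap n m ^^ (k mod p)) x" for k
  proof -
    have "(fmap n m ^^ k) x = (fmap n m ^^ (k mod p)) ((fmap n m ^^ (k div p * p)) x)"
      by (metis div_mult_mod_eq funpow_add o_apply add.commute)
    also have "\<dots> = (fmap n m ^^ (k mod p)) x" using funpow_period[OF x(3)] by simp
    finally show ?thesis .
  qed
  hence "P = (\<lambda>k. (fmap n m ^^ k) x) ` {..<p}" unfolding P using x(2)
    by (auto simp: image_iff) (metis lessThan_iff mod_less_divisor)
  thus "finite P" by simp
  show "P \<subseteq> star n" unfolding P using funpow_star[OF assms(1,2) x(1)] by auto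
  show "V \<notin> P"
  proof
    assume "V \<in> P"
    then obtain k where k: "(fmap n m ^^ k) x = V" unfolding P by (metis rangeE)
    have "k \<le> k * p" using x(2) by simp
    then have "(fmap n m ^^ (k * p)) x = (fmap n m ^^ (k * p - k)) ((fmap n m ^^ k) x)"
      by (metis funpow_add o_apply le_add_diff_inverse2)
    also have "\<dots> = V" using k funpow_V by simp
    finally have "x = V" using funpow_period[OF x(3)] by simp
    hence "P = {V}" unfolding P using funpow_V by auto
    thus False using assms(4) by simp
  qed
qed


definition aval :: "spt set \<Rightarrow> nat \<Rightarrow> real" where
  "aval P r = Min (param ` (P \<inter> edge r))"

lemma surj_mult:
  fixes m n :: nat
  assumes "coprime m n" "0 < m" "0 < n" "r < n"
  shows "\<exists>k\<ge>1. (k * m) mod n = r"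
proof -
  obtain x y where xy: "m * x = n * y + gcd m n" using bezout_nat[of m n] assms by auto
  hence xy: "m * x = n * y + 1" using assms(1) by simp
  have "((x * r + n) * m) mod n = ((m * x) * r) mod n"
    by (simp add: algebra_simps)
  also have "\<dots> = (n * (y * r) + r) mod n" using xy by (simp add: algebra_simps)
  also have "\<dots> = r" using assms by simp
  finally show ?thesis using assms by (intro exI[of _ "x * r + n"]) auto
qed

lemma orbit_vals:
  assumes m: "0 < m" "2 * m \<le> n" "coprime m n" and SO: "star_orbit n m P"
  shows "\<forall>r<n. E r (aval P 0) \<in> P"
    "\<forall>y\<in>P. \<exists>r \<tau>. y = E r \<tau> \<and> r < n \<and> aval P 0 \<le> \<tau> \<and> 0 \<le> \<tau> \<and> \<tau> < 1"
proof -
  have mn: "m < n" using m by simp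
  have PO: "periodic_orbit n m P" "P \<noteq> {V}" using SO by (auto simp: star_orbit_def)
  note of = orbit_facts[OF m(1) mn PO]
  have ne: "P \<inter> edge r \<noteq> {}" if "r < n" for r using SO that by (auto simp: star_orbit_def)
  have fin: "finite (param ` (P \<inter> edge r))" for r using of(1) by simp
  have amin: "aval P r \<le> param y" if "y \<in> P \<inter> edge r" for r y
    unfolding aval_def using fin that by (intro Min_le) auto
  have aex: "E r (aval P r) \<in> P" if "r < n" for r
  proof -
    have "aval P r \<in> param ` (P \<inter> edge r)" unfolding aval_def using fin ne[OF that]
      by (intro Min_in) auto
    then obtain y where y: "y \<in> P \<inter> edge r" "param y = aval P r" by auto
    then have "y \<noteq> V" using of(3) by auto
    then obtain \<tau> where "y = E r \<tau>" using y(1) by (auto simp: edge_def)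
    then show ?thesis using y by simp
  qed
  have shift: "aval P ((r + m) mod n) = aval P r" if "0 < r" "r < n" for r
  proof -
    let ?y = "E r (aval P r)"
    have y: "?y \<in> P \<inter> edge r" using aex[OF that(2)] of(2) by (auto simp: edge_def star_def)
    have cl: "closest P r ?y" unfolding closest_def using y amin by auto
    have "\<forall>r. 0 < r \<and> r < n \<longrightarrow>
        (\<forall>x. closest P r x \<longrightarrow> closest P ((r + m) mod n) (fmap n m x))"
      using SO unfolding star_orbit_def by blast
    then have "closest P ((r + m) mod n) (fmap n m ?y)" using cl that by blast
    moreover have fy: "fmap n m ?y = E ((r + m) mod n) (aval P r)" using that by simp
    ultimately have c2: "E ((r + m) mod n) (aval P r) \<in> P \<inter> edge ((r + m) mod n)"
      "\<forall>z \<in> P \<inter> edge ((r + m) mod n). aval P r \<le> param z"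
      unfolding closest_def by auto
    have "aval P ((r + m) mod n) \<le> aval P r" using amin[OF c2(1)] by simp
    moreover have "E ((r + m) mod n) (aval P ((r + m) mod n)) \<in> P \<inter> edge ((r + m) mod n)"
      using aex[of "(r + m) mod n"] mn of(2) by (auto simp: edge_def star_def)
    then have "aval P r \<le> aval P ((r + m) mod n)"
      using c2(2) by force
    ultimately show ?thesis by simp
  qed
  have chain: "aval P ((k * m) mod n) = aval P m" if "1 \<le> k" for k
    using that
  proof (induction k rule: dec_induct)
    case base then show ?case using mn by simp
  next
    case (step k)
    show ?case
    proof (cases "(k * m) mod n = 0")
      case True
      have "(Suc k * m) mod n = ((k * m) mod n + m) mod n" by (metis mod_add_left_eq mult_Suc add.commute)
      also have "\<dots> = m" using True mn by simp
      finally show ?thesis by simp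
    next
      case False
      have "(Suc k * m) mod n = ((k * m) mod n + m) mod n" by (metis mod_add_left_eq mult_Suc add.commute)
      then have "aval P ((Suc k * m) mod n) = aval P ((k * m) mod n)"
        using shift[of "(k * m) mod n"] False mn by simp
      then show ?thesis using step.IH by simp
    qed
  qed
  have all: "aval P r = aval P 0" if rn: "r < n" for r
  proof -
    obtain k where "k \<ge> 1" "(k * m) mod n = r" using surj_mult[of m n r] m(3) m(1) rn mn by auto
    moreover obtain k0 where "k0 \<ge> 1" "(k0 * m) mod n = 0" using surj_mult[of m n 0] m(3) m(1) mn by auto
    ultimately show ?thesis using chain by metis
  qed
  show "\<forall>r<n. E r (aval P 0) \<in> P" using aex all by metis
  show "\<forall>y\<in>P. \<exists>r \<tau>. y = E r \<tau> \<and> r < n \<and> aval P 0 \<le> \<tau> \<and> 0 \<le> \<tau> \<and> \<tau> < 1"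
  proof
    fix y assume y: "y \<in> P"
    then have "y \<noteq> V" using of(3) by auto
    then obtain r \<tau> where yy: "y = E r \<tau>" by (cases y) auto
    have r: "r < n" "0 \<le> \<tau>" "\<tau> < 1" using of(2) y yy by (auto simp: star_def)
    have "aval P r \<le> \<tau>" using amin[of y r] y yy r by (auto simp: edge_def)
    then show "\<exists>r \<tau>. y = E r \<tau> \<and> r < n \<and> aval P 0 \<le> \<tau> \<and> 0 \<le> \<tau> \<and> \<tau> < 1"
      using yy r all[OF r(1)] by auto
  qed
qed


definition TT :: "nat \<Rightarrow> real \<Rightarrow> spt set" where
  "TT n \<beta> = insert V {E r \<tau> | r \<tau>. r < n \<and> \<beta> \<le> \<tau> \<and> 0 \<le> \<tau> \<and> \<tau> < 1}"

lemma TT_star: "TT n \<beta> \<subseteq> star n"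
  by (auto simp: TT_def star_def)

lemma TT_mono: "\<alpha> \<le> \<beta> \<Longrightarrow> TT n \<beta> \<subseteq> TT n \<alpha>"
  by (auto simp: TT_def)

lemma TT_conn: "connected (emb n ` TT n \<beta>)"
proof (rule starlike_imp_connected)
  show "starlike (emb n ` TT n \<beta>)" unfolding starlike_def
  proof (intro bexI ballI)
    show "0 \<in> emb n ` TT n \<beta>" by (force simp: TT_def)
    fix x assume "x \<in> emb n ` TT n \<beta>"
    then obtain y where y: "y \<in> TT n \<beta>" "x = emb n y" by auto
    show "closed_segment 0 x \<subseteq> emb n ` TT n \<beta>"
    proof
      fix w assume w: "w \<in> closed_segment 0 x"
      show "w \<in> emb n ` TT n \<beta>"
      proof (cases y)
        case V
        then show ?thesis using w y by (force simp: TT_def)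
      next
        case (E r \<tau>)
        have rt: "r < n" "\<beta> \<le> \<tau>" "0 \<le> \<tau>" "\<tau> < 1" using y E by (auto simp: TT_def)
        obtain u where u: "0 \<le> u" "u \<le> 1" "w = u *\<^sub>R ((1 - \<tau>) *\<^sub>R cc n r)"
          using w y E unfolding seg0 by (auto simp: emb_E)
        have w2: "w = (u * (1 - \<tau>)) *\<^sub>R cc n r" using u(3) by simp
        show ?thesis
        proof (cases "u * (1 - \<tau>) = 0")
          case True
          then show ?thesis using w2 by (force simp: TT_def)
        next
          case False
          have le: "u * (1 - \<tau>) \<le> 1 - \<tau>" using u rt by (simp add: mult_left_le_one_le)
          have pos: "0 < u * (1 - \<tau>)" using False u rt by simp
          have "\<beta> \<le> 1 - u*(1-\<tau>)" "1 - u*(1-\<tau>) < 1" "0 \<le> 1 - u*(1-\<tau>)" using le pos rt by linarith+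
          then have "E r (1 - u * (1 - \<tau>)) \<in> TT n \<beta>" using rt by (auto simp: TT_def)
          moreover have "emb n (E r (1 - u * (1 - \<tau>))) = w" using w2 by (simp add: emb_E)
          ultimately show ?thesis by force
        qed
      qed
    qed
  qed
qed

lemma span_sub_TT:
  assumes "P \<subseteq> TT n \<beta>" shows "star_span n P \<subseteq> TT n \<beta>"
  using assms TT_star[of n \<beta>] TT_conn[of n \<beta>] unfolding star_span_def by blast

lemma TT_sub_span:
  assumes n: "2 \<le> n" and P: "P \<subseteq> star n" and Ev: "\<forall>r<n. E r \<beta> \<in> P"
  shows "TT n \<beta> \<subseteq> star_span n P"
proof
  fix x assume x: "x \<in> TT n \<beta>"
  show "x \<in> star_span n P" unfolding star_span_def
  proof (intro CollectI conjI allI impI)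
    show "x \<in> star n" using x TT_star by blast
    fix S assume S: "S \<subseteq> star n \<and> P \<subseteq> S \<and> connected (emb n ` S)"
    have b0: "E 0 \<beta> \<in> P" using Ev n by auto
    have b01: "0 \<le> \<beta>" "\<beta> \<le> 1" using P b0 by (auto simp: star_def)
    have inS: "E k \<beta> \<in> S" if "k < n" for k using S Ev that by auto
    show "x \<in> S"
    proof (cases x)
      case V
      have "mkpt 0 1 \<in> S"
        using separation[of S n 0 1 \<beta> \<beta> 1] S inS[of 0] inS[of 1] n b01 by auto
      then show ?thesis using V by (simp add: mkpt_def)
    next
      case (E r \<tau>)
      have rt: "r < n" "\<beta> \<le> \<tau>" "0 \<le> \<tau>" "\<tau> < 1" using x E by (auto simp: TT_def)
      define r' :: nat where "r' = (if r = 0 then 1 else 0)"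
      have r': "r' < n" "r' \<noteq> r" using n unfolding r'_def by auto
      have "mkpt r \<tau> \<in> S"
        using separation[of S n r r' \<beta> \<beta> \<tau>] S inS[of r] inS[of r'] rt r' by auto
      then show ?thesis using E rt by (simp add: mkpt_def)
    qed
  qed
qed

lemma span_order:
  assumes m: "0 < m" "2 * m \<le> n" "coprime m n"
    and SP: "star_orbit n m P" and SQ: "star_orbit n m Q" and le: "aval P 0 \<le> aval Q 0"
  shows "star_span n Q \<subseteq> star_span n P"
proof -
  have n: "2 \<le> n" using m by simp
  note vP = orbit_vals[OF m SP] and vQ = orbit_vals[OF m SQ]
  have "Q \<subseteq> TT n (aval Q 0)" using vQ(2) by (force simp: TT_def)
  hence "star_span n Q \<subseteq> TT n (aval Q 0)" by (rule span_sub_TT)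
  also have "\<dots> \<subseteq> TT n (aval P 0)" using le by (rule TT_mono)
  also have "\<dots> \<subseteq> star_span n P"
  proof (rule TT_sub_span[OF n])
    show "P \<subseteq> star n" using vP(2) by (force simp: star_def)
    show "\<forall>r<n. E r (aval P 0) \<in> P" using vP(1) .
  qed
  finally show ?thesis .
qed

theorem lemma2p2:
  fixes m n :: nat
  assumes "0 < m" and "2 * m \<le> n" and "coprime m n"
  assumes "star_orbit n m P" and "star_orbit n m Q"
  shows "star_span n P \<subseteq> star_span n Q \<or> star_span n Q \<subseteq> star_span n P"
proof (cases "aval P 0 \<le> aval Q 0")
  case True
  then show ?thesis using span_order[OF assms(1-3) assms(4) assms(5)] by blast
next
  case False
  then show ?thesis using span_order[OF assms(1-3) assms(5) assms(4)] by simp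
qed

end
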